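(* Let $n\ge 2$, $0\le m\le n$ and $k$ generic. Among linear combinations of the currents $A_j$, $Q_\pm$, $Y$ (i.e. dimension-one fields of zero momentum in $\mathcal{V}_\xi$), those commuting with all screenings of the $n[m]$ realization form a one-dimensional space, spanned by $$\mathcal{H}^{(k)}_{n[m]}(z)=\ell_n(k)Y(z)+\sum_{i=1}^{n-m-1}\frac{n-i-m}{n}A_i(z)+\frac{n-m}{n}Q_+(z)-\sum_{i=-m+1}^{-1}\frac{m+i}{n}A_i(z)-\frac{m}{n}Q_-(z),$$ which satisfies $\mathcal{H}^{(k)}_{n[m]}(z)\mathcal{H}^{(k)}_{n[m]}(w)\sim \ell_n(k)(z-w)^{-2}$, where $\ell_n(k)=\frac{n-1}{n}k+n-2$.
   Context: Setup. Fix integers $n\ge 2$ and $0\le m\le n$, a generic complex number $k$ (in particular $k\neq -n$), and put $K=k+n$. Let $\varphi=(\varphi_1,\dots,\varphi_{n+1})$ be free scalar fields with OPE $\partial\varphi_i(z)\partial\varphi_j(w)\sim\delta_{ij}(z-w)^{-2}$, and let $(\,,\,)$ be the standard symmetric bilinear form on $\mathbb{C}^{n+1}$. Choose vectors $a_i$ ($1\le i\le n-m-1$), $a_{-i}$ ($1\le i\le m-1$), $\psi_+$ (present iff $m\le n-1$), $\psi_-$ (present iff $m\ge 1$), and $\xi$ in $\mathbb{C}^{n+1}$ whose nonzero pairwise products are: $(a_j,a_j)=2K$ for every $a_j$ present; $(a_i,a_{i+1})=-K$ for $1\le i\le n-m-2$; $(a_{-i},a_{-i-1})=-K$ for $1\le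 i\le m-2$; $(a_1,\psi_+)=-K$; $(a_{-1},\psi_-)=-K$; $(\psi_\pm,\psi_\pm)=1$; $(\psi_+,\psi_-)=K-1$; $(\psi_+,\xi)=1$; $(\psi_-,\xi)=-1$; all other products (including $(\xi,\xi)$ and $(a_j,\xi)$) vanish. Define currents $A_j=(a_j,\partial\varphi)$, $Q_\pm=(\psi_\pm,\partial\varphi)$, $Y=(\xi,\partial\varphi)$ and the field $\Xi=(\xi,\varphi)$. The screening operators are $E_j=\oint e^{(a_j,\varphi)}$ for each $a_j$ present and $\Psi_\pm=\oint e^{(\psi_\pm,\varphi)}$ for each $\psi_\pm$ present. Let $\mathcal{V}_\xi$ be the space of fields $:P(\partial\varphi)e^{p\Xi}:$, $p\in\mathbb{Z}$, with $P$ a normal-ordered differential polynomial in the components of $\partial\varphi$. A field $X(w)$ commutes with a screening $\oint s(z)\,dz$ if the residue at $z=w$ of the OPE $s(z)X(w)$ vanishes. Terms involving absent vectors (e.g. $Q_-$ when $m=0$) are omitted. *)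

theory Defs
  imports "HOL-Analysis.Analysis"
begin

text \<open>Labels of the vectors of the n[m] realization:
  VA j for a_j (j a nonzero integer), VPp for psi_plus, VPm for psi_minus, VXi for xi.\<close>
datatype vlabel = VA int | VPp | VPm | VXi

definition present :: "nat \<Rightarrow> nat \<Rightarrow> vlabel set" where
  "present n m =
     VA ` {1 .. int n - int m - 1} \<union> VA ` {- int m + 1 .. -1}
     \<union> (if m < n then {VPp} else {})
     \<union> (if 1 \<le> m then {VPm} else {}) \<union> {VXi}"

definition screening_labels :: "nat \<Rightarrow> nat \<Rightarrow> vlabel set" where
  "screening_labels n m = present n m - {VXi}"

text \<open>Prescribed Gram matrix (with K = k + n); entries not listed vanish.\<close>
fun gram :: "complex \<Rightarrow> vlabel \<Rightarrow> vlabel \<Rightarrow> complex" where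
  "gram K (VA i) (VA j) =
     (if i = j then 2 * K
      else if 1 \<le> i \<and> 1 \<le> j \<and> (j = i + 1 \<or> i = j + 1) then - K
      else if i \<le> -1 \<and> j \<le> -1 \<and> (j = i - 1 \<or> i = j - 1) then - K
      else 0)"
| "gram K (VA i) VPp = (if i = 1 then - K else 0)"
| "gram K VPp (VA i) = (if i = 1 then - K else 0)"
| "gram K (VA i) VPm = (if i = -1 then - K else 0)"
| "gram K VPm (VA i) = (if i = -1 then - K else 0)"
| "gram K (VA i) VXi = 0"
| "gram K VXi (VA i) = 0"
| "gram K VPp VPp = 1"
| "gram K VPm VPm = 1"
| "gram K VPp VPm = K - 1"
| "gram K VPm VPp = K - 1"
| "gram K VPp VXi = 1"
| "gram K VXi VPp = 1"
| "gram K VPm VXi = -1"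
| "gram K VXi VPm = -1"
| "gram K VXi VXi = 0"

definition bil :: "complex ^ 'd \<Rightarrow> complex ^ 'd \<Rightarrow> complex" where
  "bil x y = (\<Sum>i\<in>UNIV. x $ i * y $ i)"

text \<open>The current (v, d phi) commutes with the screening oint exp((s, phi)):
  the OPE exp((s,phi))(z) (v,d phi)(w) ~ -(s,v) exp((s,phi))(w) / (z - w),
  so the residue vanishes iff (s, v) = 0.\<close>
definition commutes_screening :: "complex ^ 'd \<Rightarrow> complex ^ 'd \<Rightarrow> bool" where
  "commutes_screening s v \<longleftrightarrow> bil s v = 0"

text \<open>Vectors v such that the field (v, d phi) is a linear combination of the
  currents A_j, Q_+-, Y of the realization.\<close>
definition currents_span :: "nat \<Rightarrow> nat \<Rightarrow> (vlabel \<Rightarrow> complex ^ 'd) \<Rightarrow> (complex ^ 'd) set" where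
  "currents_span n m V = {v. \<exists>c. v = (\<Sum>x\<in>present n m. c x *s V x)}"

definition ell :: "nat \<Rightarrow> complex \<Rightarrow> complex" where
  "ell n k = (of_nat n - 1) / of_nat n * k + of_nat n - 2"

definition Hvec :: "nat \<Rightarrow> nat \<Rightarrow> complex \<Rightarrow> (vlabel \<Rightarrow> complex ^ 'd) \<Rightarrow> complex ^ 'd" where
  "Hvec n m k V =
     ell n k *s V VXi
     + (\<Sum>i\<in>{1 .. int n - int m - 1}. (of_int (int n - i - int m) / of_nat n) *s V (VA i))
     + (of_nat (n - m) / of_nat n) *s V VPp
     - (\<Sum>i\<in>{- int m + 1 .. -1}. (of_int (int m + i) / of_nat n) *s V (VA i))
     - (of_nat m / of_nat n) *s V VPm"

end

theory Submission
  imports Defs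
begin

lemma bil_smult: "bil u (a *s w) = a * bil u w"
  unfolding bil_def by (simp add: sum_distrib_left mult.left_commute)

lemma bil_sum: "bil u (\<Sum>x\<in>A. f x) = (\<Sum>x\<in>A. bil u (f x))"
  unfolding bil_def by (simp add: sum_distrib_left sum.swap[of _ A])

lemma bil_sym: "bil u w = bil w u"
  unfolding bil_def by (simp add: mult.commute)

lemma bil_zero: "bil 0 0 = 0"
  unfolding bil_def by simp

lemma present_finite: "finite (present n m)"
  unfolding present_def by simp

lemma mem_VA: "VA j \<in> present n m \<longleftrightarrow> (1 \<le> j \<and> j \<le> int n - int m - 1) \<or> (- int m + 1 \<le> j \<and> j \<le> -1)"
  unfolding present_def by auto

lemma mem_VPp: "VPp \<in> present n m \<longleftrightarrow> m < n"
  unfolding present_def by auto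

lemma mem_VPm: "VPm \<in> present n m \<longleftrightarrow> 1 \<le> m"
  unfolding present_def by auto

lemma mem_VXi: "VXi \<in> present n m"
  unfolding present_def by auto

lemma scr: "s \<in> screening_labels n m \<longleftrightarrow> s \<in> present n m \<and> s \<noteq> VXi"
  unfolding screening_labels_def by auto

lemma sum_ind: fixes c :: "_ \<Rightarrow> complex" shows "finite A \<Longrightarrow> (\<Sum>x\<in>A. c x * (if x = a then r else 0)) = (if a \<in> A then c a * r else 0)"
proof -
  assume f: "finite A"
  have "(\<Sum>x\<in>A. c x * (if x = a then r else 0)) = (\<Sum>x\<in>A. if x = a then c a * r else 0)"
    by (intro sum.cong) auto
  also have "\<dots> = (if a \<in> A then c a * r else 0)" using f by simp
  finally show ?thesis .
qed

definition Lf :: "nat \<Rightarrow> nat \<Rightarrow> complex \<Rightarrow> (vlabel \<Rightarrow> complex) \<Rightarrow> vlabel \<Rightarrow> complex" where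
  "Lf n m K c s = (\<Sum>x\<in>present n m. c x * gram K s x)"

lemma gram_VA_pos: "1 \<le> i \<Longrightarrow> gram K (VA i) x =
   (if x = VA i then 2*K else 0) + (if x = VA (i+1) then -K else 0)
   + (if x = VA (i-1) then (if 2 \<le> i then -K else 0) else 0) + (if x = VPp then (if i = 1 then -K else 0) else 0)"
  by (cases x) auto

lemma gram_VA_neg: "i \<le> -1 \<Longrightarrow> gram K (VA i) x =
   (if x = VA i then 2*K else 0) + (if x = VA (i-1) then -K else 0)
   + (if x = VA (i+1) then (if i \<le> -2 then -K else 0) else 0) + (if x = VPm then (if i = -1 then -K else 0) else 0)"
  by (cases x) auto

lemma gram_VPp: "gram K VPp x =
   (if x = VA 1 then -K else 0) + (if x = VPp then 1 else 0)
   + (if x = VPm then K - 1 else 0) + (if x = VXi then 1 else 0)"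
  by (cases x) auto

lemma gram_VPm: "gram K VPm x =
   (if x = VA (-1) then -K else 0) + (if x = VPm then 1 else 0)
   + (if x = VPp then K - 1 else 0) + (if x = VXi then -1 else 0)"
  by (cases x) auto

lemma gram_VXi: "gram K VXi x = (if x = VPp then 1 else 0) + (if x = VPm then -1 else 0)"
  by (cases x) auto

lemma L_VA_pos: assumes "1 \<le> i" "i \<le> int n - int m - 1"
  shows "Lf n m K c (VA i) = 2*K*c (VA i) - (if i+1 \<le> int n - int m - 1 then K * c (VA (i+1)) else 0)
     - (if 2 \<le> i then K * c (VA (i-1)) else 0) - (if i = 1 then K * c VPp else 0)"
proof -
  have "Lf n m K c (VA i) = (\<Sum>x\<in>present n m. c x * (if x = VA i then 2*K else 0) + c x * (if x = VA (i+1) then -K else 0)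
   + c x * (if x = VA (i-1) then (if 2 \<le> i then -K else 0) else 0) + c x * (if x = VPp then (if i = 1 then -K else 0) else 0))"
    unfolding Lf_def using assms(1) by (intro sum.cong) (simp_all add: gram_VA_pos distrib_left)
  also have "\<dots> = (if VA i \<in> present n m then c (VA i) * (2*K) else 0) + (if VA (i+1) \<in> present n m then c (VA (i+1)) * (-K) else 0)
    + (if VA (i-1) \<in> present n m then c (VA (i-1)) * (if 2 \<le> i then -K else 0) else 0)
    + (if VPp \<in> present n m then c VPp * (if i = 1 then -K else 0) else 0)"
    unfolding sum.distrib sum_ind[OF present_finite] by simp
  finally show ?thesis using assms by (auto simp: mem_VA mem_VPp)
qed

lemma L_VA_neg: assumes "- int m + 1 \<le> i" "i \<le> -1"
  shows "Lf n m K c (VA i) = 2*K*c (VA i) - (if - int m + 1 \<le> i - 1 then K * c (VA (i-1)) else 0)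
     - (if i \<le> -2 then K * c (VA (i+1)) else 0) - (if i = -1 then K * c VPm else 0)"
proof -
  have "Lf n m K c (VA i) = (\<Sum>x\<in>present n m. c x * (if x = VA i then 2*K else 0) + c x * (if x = VA (i-1) then -K else 0)
   + c x * (if x = VA (i+1) then (if i \<le> -2 then -K else 0) else 0) + c x * (if x = VPm then (if i = -1 then -K else 0) else 0))"
    unfolding Lf_def using assms(2) by (intro sum.cong) (simp_all add: gram_VA_neg distrib_left)
  also have "\<dots> = (if VA i \<in> present n m then c (VA i) * (2*K) else 0) + (if VA (i-1) \<in> present n m then c (VA (i-1)) * (-K) else 0)
    + (if VA (i+1) \<in> present n m then c (VA (i+1)) * (if i \<le> -2 then -K else 0) else 0)
    + (if VPm \<in> present n m then c VPm * (if i = -1 then -K else 0) else 0)"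
    unfolding sum.distrib sum_ind[OF present_finite] by simp
  finally show ?thesis using assms by (auto simp: mem_VA mem_VPm)
qed

lemma L_VPp: assumes "m < n"
  shows "Lf n m K c VPp = - (if 1 \<le> int n - int m - 1 then K * c (VA 1) else 0) + c VPp
     + (if 1 \<le> m then (K - 1) * c VPm else 0) + c VXi"
proof -
  have "Lf n m K c VPp = (\<Sum>x\<in>present n m. c x * (if x = VA 1 then -K else 0) + c x * (if x = VPp then 1 else 0)
   + c x * (if x = VPm then K - 1 else 0) + c x * (if x = VXi then 1 else 0))"
    unfolding Lf_def by (intro sum.cong) (simp_all add: gram_VPp distrib_left)
  also have "\<dots> = (if VA 1 \<in> present n m then c (VA 1) * (-K) else 0) + (if VPp \<in> present n m then c VPp * 1 else 0)
    + (if VPm \<in> present n m then c VPm * (K - 1) else 0)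
    + (if VXi \<in> present n m then c VXi * 1 else 0)"
    unfolding sum.distrib sum_ind[OF present_finite] by simp
  finally show ?thesis using assms by (auto simp: mem_VA mem_VPm mem_VPp mem_VXi)
qed

lemma L_VPm: assumes "1 \<le> m"
  shows "Lf n m K c VPm = - (if - int m + 1 \<le> -1 then K * c (VA (-1)) else 0) + c VPm
     + (if m < n then (K - 1) * c VPp else 0) - c VXi"
proof -
  have "Lf n m K c VPm = (\<Sum>x\<in>present n m. c x * (if x = VA (-1) then -K else 0) + c x * (if x = VPm then 1 else 0)
   + c x * (if x = VPp then K - 1 else 0) + c x * (if x = VXi then -1 else 0))"
    unfolding Lf_def by (intro sum.cong) (simp_all add: gram_VPm distrib_left)
  also have "\<dots> = (if VA (-1) \<in> present n m then c (VA (-1)) * (-K) else 0) + (if VPm \<in> present n m then c VPm * 1 else 0)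
    + (if VPp \<in> present n m then c VPp * (K - 1) else 0)
    + (if VXi \<in> present n m then c VXi * (-1) else 0)"
    unfolding sum.distrib sum_ind[OF present_finite] by simp
  finally show ?thesis using assms by (auto simp: mem_VA mem_VPm mem_VPp mem_VXi)
qed

lemma L_VXi:
  shows "Lf n m K c VXi = (if m < n then c VPp else 0) - (if 1 \<le> m then c VPm else 0)"
proof -
  have "Lf n m K c VXi = (\<Sum>x\<in>present n m. c x * (if x = VPp then 1 else 0) + c x * (if x = VPm then -1 else 0))"
    unfolding Lf_def by (intro sum.cong) (simp_all add: gram_VXi distrib_left)
  also have "\<dots> = (if VPp \<in> present n m then c VPp * 1 else 0) + (if VPm \<in> present n m then c VPm * (-1) else 0)"
    unfolding sum.distrib sum_ind[OF present_finite] by simp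
  finally show ?thesis by (auto simp: mem_VPm mem_VPp)
qed

definition dd :: "nat \<Rightarrow> nat \<Rightarrow> (vlabel \<Rightarrow> complex) \<Rightarrow> nat \<Rightarrow> complex" where
  "dd n m c j = (if j = 0 then c VPp else if n - m \<le> j then 0 else c (VA (int j)))"

definition ee :: "nat \<Rightarrow> (vlabel \<Rightarrow> complex) \<Rightarrow> nat \<Rightarrow> complex" where
  "ee m c j = (if j = 0 then c VPm else if m \<le> j then 0 else c (VA (- int j)))"

lemma Ld: assumes "m < n" "1 \<le> j" "j + 1 \<le> n - m"
  shows "Lf n m K c (VA (int j)) = K * (2 * dd n m c j - dd n m c (j+1) - dd n m c (j-1))"
proof -
  have "Lf n m K c (VA (int j)) = 2*K*c (VA (int j)) - (if int j+1 \<le> int n - int m - 1 then K * c (VA (int j+1)) else 0)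
     - (if 2 \<le> int j then K * c (VA (int j-1)) else 0) - (if int j = 1 then K * c VPp else 0)"
    using assms by (intro L_VA_pos) auto
  also have "\<dots> = K * (2 * dd n m c j - dd n m c (j+1) - dd n m c (j-1))"
    proof -
    have a: "dd n m c j = c (VA (int j))" using assms unfolding dd_def by auto
    have b: "dd n m c (j+1) = (if int j+1 \<le> int n - int m - 1 then c (VA (int j+1)) else 0)"
      using assms unfolding dd_def by (auto simp: algebra_simps)
    have c: "dd n m c (j-1) = (if int j = 1 then c VPp else c (VA (int j - 1)))"
      using assms unfolding dd_def by (auto simp: of_nat_diff)
    show ?thesis unfolding a b c using assms by (auto simp: algebra_simps)
  qed
  finally show ?thesis .
qed

lemma Le: assumes "1 \<le> j" "j + 1 \<le> m"
  shows "Lf n m K c (VA (- int j)) = K * (2 * ee m c j - ee m c (j+1) - ee m c (j-1))"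
proof -
  have "Lf n m K c (VA (- int j)) = 2*K*c (VA (- int j)) - (if - int m + 1 \<le> - int j - 1 then K * c (VA (- int j-1)) else 0)
     - (if - int j \<le> -2 then K * c (VA (- int j+1)) else 0) - (if - int j = -1 then K * c VPm else 0)"
    using assms by (intro L_VA_neg) auto
  also have "\<dots> = K * (2 * ee m c j - ee m c (j+1) - ee m c (j-1))"
    proof -
    have a: "ee m c j = c (VA (- int j))" using assms unfolding ee_def by auto
    have b: "ee m c (j+1) = (if - int m + 1 \<le> - int j - 1 then c (VA (- int j - 1)) else 0)"
    proof -
      have e: "- int (j+1) = - int j - 1" by simp
      show ?thesis using assms unfolding ee_def e by auto
    qed
    have c: "ee m c (j-1) = (if int j = 1 then c VPm else c (VA (- int j + 1)))"
      using assms unfolding ee_def by (auto simp: of_nat_diff)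
    show ?thesis unfolding a b c using assms by (auto simp: algebra_simps)
  qed
  finally show ?thesis .
qed


lemma LP: assumes "m < n"
  shows "Lf n m K c VPp = - K * dd n m c 1 + dd n m c 0 + (if 1 \<le> m then (K - 1) * ee m c 0 else 0) + c VXi"
proof -
  have a: "dd n m c 1 = (if 1 \<le> int n - int m - 1 then c (VA 1) else 0)" using assms unfolding dd_def by auto
  have b: "dd n m c 0 = c VPp" "ee m c 0 = c VPm" unfolding dd_def ee_def by auto
  show ?thesis unfolding L_VPp[OF assms] a b by simp
qed

lemma LM: assumes "1 \<le> m"
  shows "Lf n m K c VPm = - K * ee m c 1 + ee m c 0 + (if m < n then (K - 1) * dd n m c 0 else 0) - c VXi"
proof -
  have a: "ee m c 1 = (if - int m + 1 \<le> -1 then c (VA (-1)) else 0)" using assms unfolding ee_def by auto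
  have b: "dd n m c 0 = c VPp" "ee m c 0 = c VPm" unfolding dd_def ee_def by auto
  show ?thesis unfolding L_VPm[OF assms] a b by simp
qed

lemma arith_lin: fixes d :: "nat \<Rightarrow> complex"
  assumes "\<forall>j. 1 \<le> j \<and> j + 1 \<le> N \<longrightarrow> d (j+1) = 2 * d j - d (j-1)"
  shows "j \<le> N \<Longrightarrow> d j = d 0 + of_nat j * (d 1 - d 0)"
proof (induction j rule: less_induct)
  case (less j)
  show ?case
  proof (cases "j \<le> 1")
    case True then show ?thesis by (cases j) auto
  next
    case False
    define i where "i = j - 2"
    have i: "j = i + 2" using False unfolding i_def by simp
    have "d j = 2 * d (i+1) - d i" using assms[rule_format, of "i+1"] i less.prems by simp
    have h1: "d (i+1) = d 0 + of_nat (i+1) * (d 1 - d 0)" using less.IH[of "i+1"] i less.prems by simp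
    have h2: "d i = d 0 + of_nat i * (d 1 - d 0)" using less.IH[of "i"] i less.prems by simp
    have "d j = 2 * d (i+1) - d i" using assms[rule_format, of "i+1"] i less.prems by simp
    also have "\<dots> = d 0 + of_nat j * (d 1 - d 0)"
      unfolding h1 h2 i by (simp add: algebra_simps)
    finally show ?thesis .
  qed
qed

lemma arith_prog: fixes d :: "nat \<Rightarrow> complex"
  assumes "\<forall>j. 1 \<le> j \<and> j + 1 \<le> N \<longrightarrow> d (j+1) = 2 * d j - d (j-1)" "d N = 0" "1 \<le> N" "j \<le> N"
  shows "d j = d 0 * (of_nat N - of_nat j) / of_nat N"
proof -
  have N: "d 0 + of_nat N * (d 1 - d 0) = 0" using arith_lin[OF assms(1), of N] assms(2) by simp
  have "d j = d 0 + of_nat j * (d 1 - d 0)" using arith_lin[OF assms(1) assms(4)] .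
  moreover have "d 1 - d 0 = - d 0 / of_nat N" using N assms(3) by (simp add: field_simps)
  ultimately have "d j = d 0 + of_nat j * (- d 0 / of_nat N)" by simp
  then show ?thesis using assms(3) by (simp add: field_simps)
qed

fun hc :: "nat \<Rightarrow> nat \<Rightarrow> complex \<Rightarrow> vlabel \<Rightarrow> complex" where
  "hc n m k (VA i) = (if 1 \<le> i then of_int (int n - i - int m) / of_nat n else - (of_int (int m + i) / of_nat n))"
| "hc n m k VPp = of_nat (n - m) / of_nat n"
| "hc n m k VPm = - (of_nat m / of_nat n)"
| "hc n m k VXi = ell n k"

lemma uniq:
  assumes n2: "2 \<le> n" and mn: "m \<le> n" and KK: "K = k + of_nat n" and K0: "K \<noteq> 0"
    and L0: "\<forall>s\<in>screening_labels n m. Lf n m K c s = 0"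
  shows "\<exists>t. \<forall>x\<in>present n m. c x = t * hc n m k x"
proof -
  define N where "N = n - m"
  define d where "d = dd n m c"
  define e where "e = ee m c"
  have nz: "(of_nat n :: complex) \<noteq> 0" using n2 by simp
  have pos: "d j = d 0 * (of_nat N - of_nat j) / of_nat N" if "m < n" "j \<le> N" for j
  proof (rule arith_prog[where N = N])
    show "\<forall>j. 1 \<le> j \<and> j + 1 \<le> N \<longrightarrow> d (j + 1) = 2 * d j - d (j - 1)"
    proof (intro allI impI)
      fix j assume j: "1 \<le> j \<and> j + 1 \<le> N"
      have "VA (int j) \<in> screening_labels n m" using j unfolding scr N_def by (auto simp: mem_VA)
      then have "Lf n m K c (VA (int j)) = 0" using L0 by blast
      then have "K * (2 * d j - d (j+1) - d (j-1)) = 0" unfolding d_def using Ld[where K=K and c=c and m=m and n=n and j=j] j that unfolding N_def by simp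
      then have "2 * d j - d (j+1) - d (j-1) = 0" using K0 by simp
      then show "d (j + 1) = 2 * d j - d (j - 1)" by algebra
    qed
    show "d N = 0" using that unfolding d_def dd_def N_def by simp
    show "1 \<le> N" using that unfolding N_def by simp
    show "j \<le> N" by fact
  qed
  have neg: "e j = e 0 * (of_nat m - of_nat j) / of_nat m" if "1 \<le> m" "j \<le> m" for j
  proof (rule arith_prog[where N = m])
    show "\<forall>j. 1 \<le> j \<and> j + 1 \<le> m \<longrightarrow> e (j + 1) = 2 * e j - e (j - 1)"
    proof (intro allI impI)
      fix j assume j: "1 \<le> j \<and> j + 1 \<le> m"
      have "VA (- int j) \<in> screening_labels n m" using j unfolding scr by (auto simp: mem_VA)
      then have "Lf n m K c (VA (- int j)) = 0" using L0 by blast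
      then have "K * (2 * e j - e (j+1) - e (j-1)) = 0" unfolding e_def using Le[where K=K and c=c and m=m and n=n and j=j] j by simp
      then have "2 * e j - e (j+1) - e (j-1) = 0" using K0 by simp
      then show "e (j + 1) = 2 * e j - e (j - 1)" by algebra
    qed
    show "e m = 0" using that unfolding e_def ee_def by simp
    show "1 \<le> m" by fact
    show "j \<le> m" by fact
  qed
  define t where "t = (if m < n then d 0 * of_nat n / of_nat N else - (e 0 * of_nat n / of_nat m))"
  have F1: "d 0 = t * of_nat N / of_nat n" if "m < n"
    using that nz unfolding t_def N_def by (simp add: field_simps)
  have Nc: "(of_nat N :: complex) = of_nat n - of_nat m" using mn unfolding N_def by (simp add: of_nat_diff)
  have LPz: "- K * d 1 + d 0 + (if 1 \<le> m then (K - 1) * e 0 else 0) + c VXi = 0" if "m < n"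
  proof -
    have "VPp \<in> screening_labels n m" using that unfolding scr by (simp add: mem_VPp)
    then show ?thesis using L0 LP[OF that, where K=K and c=c] unfolding d_def e_def by simp
  qed
  have LMz: "- K * e 1 + e 0 + (if m < n then (K - 1) * d 0 else 0) - c VXi = 0" if "1 \<le> m"
  proof -
    have "VPm \<in> screening_labels n m" using that unfolding scr by (simp add: mem_VPm)
    then show ?thesis using L0 LM[OF that, where K=K and c=c and n=n] unfolding d_def e_def by simp
  qed
  have d1: "d 1 = d 0 * (of_nat N - 1) / of_nat N" if "m < n"
    using pos[OF that, of 1] that unfolding N_def by simp
  have e1: "e 1 = e 0 * (of_nat m - 1) / of_nat m" if "1 \<le> m"
    using neg[OF that, of 1] that by simp
  have F23: "(1 \<le> m \<longrightarrow> e 0 = - t * of_nat m / of_nat n) \<and> c VXi = t * ell n k"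
  proof (cases "m < n")
    case mlt: True
    have Nnz: "(of_nat N :: complex) \<noteq> 0" using mlt unfolding N_def by simp
    have d0t: "d 0 = t * of_nat N / of_nat n" using F1[OF mlt] .
    have d1t: "d 1 = t * (of_nat N - 1) / of_nat n" unfolding d1[OF mlt] d0t using Nnz nz by (simp add: field_simps)
    show ?thesis
    proof (cases "1 \<le> m")
      case m1: True
      have mnz: "(of_nat m :: complex) \<noteq> 0" using m1 by simp
      have eqP: "- K * d 1 + d 0 + (K - 1) * e 0 + c VXi = 0" using LPz[OF mlt] m1 by simp
      have eqM: "- K * e 1 + e 0 + (K - 1) * d 0 - c VXi = 0" using LMz[OF m1] mlt by simp
      have "K * (d 0 / of_nat N + e 0 / of_nat m) = (- K * d 1 + d 0 + (K - 1) * e 0 + c VXi) + (- K * e 1 + e 0 + (K - 1) * d 0 - c VXi)"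
        unfolding d1[OF mlt] e1[OF m1] using Nnz mnz by (simp add: field_simps)
      also have "\<dots> = 0" using eqP eqM by simp
      finally have "d 0 / of_nat N + e 0 / of_nat m = 0" using K0 by simp
      then have e0t: "e 0 = - t * of_nat m / of_nat n" using d0t Nnz mnz nz by (simp add: field_simps) algebra
      have cx: "c VXi = K * d 1 - d 0 - (K - 1) * e 0" using eqP by algebra
      have "c VXi = t * ell n k"
        unfolding cx d1t d0t e0t ell_def KK Nc using nz by (simp add: field_simps)
      then show ?thesis using e0t by simp
    next
      case False
      then have m0: "m = 0" by simp
      have eqP: "- K * d 1 + d 0 + c VXi = 0" using LPz[OF mlt] m0 by simp
      have cx: "c VXi = K * d 1 - d 0" using eqP by algebra
      have "c VXi = t * ell n k"
        unfolding cx d1t d0t ell_def KK Nc using nz m0 by (simp add: field_simps)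
      then show ?thesis using m0 by simp
    qed
  next
    case False
    then have mn': "m = n" using mn by simp
    have m1: "1 \<le> m" using mn' n2 by simp
    have mnz: "(of_nat m :: complex) \<noteq> 0" using m1 by simp
    have e0t: "e 0 = - t" using mn' nz unfolding t_def by simp
    have e1t: "e 1 = - t * (of_nat n - 1) / of_nat n" using e1[OF m1] e0t mn' by simp
    have eqM: "- K * e 1 + e 0 - c VXi = 0" using LMz[OF m1] mn' by simp
    have cx: "c VXi = e 0 - K * e 1" using eqM by algebra
    have "c VXi = t * ell n k"
      unfolding cx e1t e0t ell_def KK using nz by (simp add: field_simps)
    then show ?thesis using e0t mn' nz by simp
  qed
  show ?thesis
  proof (intro exI ballI)
    fix x assume x: "x \<in> present n m"
    show "c x = t * hc n m k x"
    proof (cases x)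
      case (VA i)
      show ?thesis
      proof (cases "1 \<le> i")
        case True
        then have i: "i \<le> int n - int m - 1" using x VA by (auto simp: mem_VA)
        then have mlt: "m < n" using True by simp
        have Nnz: "(of_nat N :: complex) \<noteq> 0" using mlt unfolding N_def by simp
        have "c x = d (nat i)" unfolding d_def dd_def VA using True i by simp
        also have "\<dots> = d 0 * (of_nat N - of_nat (nat i)) / of_nat N"
          using pos[OF mlt, of "nat i"] i True unfolding N_def by simp
        also have "\<dots> = t * hc n m k x"
          unfolding F1[OF mlt] VA Nc using True nz Nnz[unfolded Nc] by (simp add: field_simps)
        finally show ?thesis .
      next
        case False
        then have i: "- int m + 1 \<le> i" "i \<le> -1" using x VA by (auto simp: mem_VA)
        then have m1: "1 \<le> m" by simp
        have "c x = e (nat (- i))" unfolding e_def ee_def VA using i by simp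
        also have "\<dots> = e 0 * (of_nat m - of_nat (nat (- i))) / of_nat m"
          using neg[OF m1, of "nat (- i)"] i by simp
        also have "\<dots> = t * hc n m k x"
          using F23 m1 i VA nz by (simp add: field_simps)
        finally show ?thesis .
      qed
    next
      case VPp
      then have mlt: "m < n" using x by (simp add: mem_VPp)
      have "c x = d 0" unfolding d_def dd_def VPp by simp
      then show ?thesis unfolding F1[OF mlt] VPp using Nc mn by (simp add: of_nat_diff)
    next
      case VPm
      then have m1: "1 \<le> m" using x by (simp add: mem_VPm)
      have "c x = e 0" unfolding e_def ee_def VPm by simp
      then show ?thesis using F23 m1 VPm by simp
    next
      case VXi
      then show ?thesis using F23 by simp
    qed
  qed
qed

lemma hc_pos: "1 \<le> i \<Longrightarrow> hc n m k (VA i) = of_int (int n - i - int m) / of_nat n"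
  by simp

lemma hL:
  assumes n2: "2 \<le> n" and mn: "m \<le> n" and KK: "K = k + of_nat n"
  shows "\<forall>s\<in>screening_labels n m. Lf n m K (hc n m k) s = 0"
proof
  fix s assume s: "s \<in> screening_labels n m"
  have nz: "(of_nat n :: complex) \<noteq> 0" using n2 by simp
  show "Lf n m K (hc n m k) s = 0"
  proof (cases s)
    case (VA i)
    show ?thesis
    proof (cases "1 \<le> i")
      case True
      then have i: "i \<le> int n - int m - 1" using s VA by (auto simp: scr mem_VA)
      have A: "(if i+1 \<le> int n - int m - 1 then K * hc n m k (VA (i+1)) else 0) = K * (of_int (int n - (i+1) - int m) / of_nat n)"
      proof (cases "i+1 \<le> int n - int m - 1")
        case False
        then have "int n - (i+1) - int m = 0" using i by linarith
        then show ?thesis using False by simp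
      qed (use True in simp)
      have B: "(if 2 \<le> i then K * hc n m k (VA (i-1)) else 0) + (if i = 1 then K * hc n m k VPp else 0)
         = K * (of_int (int n - (i-1) - int m) / of_nat n)"
        using True mn by (auto simp: of_nat_diff)
      have "Lf n m K (hc n m k) s = 2*K*hc n m k (VA i) - (if i+1 \<le> int n - int m - 1 then K * hc n m k (VA (i+1)) else 0)
         - ((if 2 \<le> i then K * hc n m k (VA (i-1)) else 0) + (if i = 1 then K * hc n m k VPp else 0))"
        unfolding VA using L_VA_pos[OF True i, where K=K and c="hc n m k"] by simp
      also have "\<dots> = 0" unfolding A B using True nz by (simp add: field_simps)
      finally show ?thesis .
    next
      case False
      then have i: "- int m + 1 \<le> i" "i \<le> -1" using s VA by (auto simp: scr mem_VA)
      have A: "(if - int m + 1 \<le> i - 1 then K * hc n m k (VA (i-1)) else 0) = - K * (of_int (int m + (i-1)) / of_nat n)"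
      proof (cases "- int m + 1 \<le> i - 1")
        case False
        then have "int m + (i - 1) = 0" using i by linarith
        then show ?thesis using False by simp
      qed (use i in simp)
      have B: "(if i \<le> -2 then K * hc n m k (VA (i+1)) else 0) + (if i = -1 then K * hc n m k VPm else 0)
         = - K * (of_int (int m + (i+1)) / of_nat n)"
        using i by auto
      have "Lf n m K (hc n m k) s = 2*K*hc n m k (VA i) - (if - int m + 1 \<le> i - 1 then K * hc n m k (VA (i-1)) else 0)
         - ((if i \<le> -2 then K * hc n m k (VA (i+1)) else 0) + (if i = -1 then K * hc n m k VPm else 0))"
        unfolding VA using L_VA_neg[OF i, where K=K and c="hc n m k" and n=n] by simp
      also have "\<dots> = 0" unfolding A B using False nz by (simp add: field_simps)
      finally show ?thesis .
    qed
  next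
    case VPp
    then have mlt: "m < n" using s by (simp add: scr mem_VPp)
    have A: "(if 1 \<le> int n - int m - 1 then K * hc n m k (VA 1) else 0) = K * (of_int (int n - 1 - int m) / of_nat n)"
    proof (cases "1 \<le> int n - int m - 1")
      case False
      then have "int n - 1 - int m = 0" using mlt by linarith
      then show ?thesis using False by simp
    qed simp
    have B: "(if 1 \<le> m then (K - 1) * hc n m k VPm else 0) = (K - 1) * (- (of_nat m / of_nat n))"
      by (cases "1 \<le> m") auto
    have "Lf n m K (hc n m k) s = - (if 1 \<le> int n - int m - 1 then K * hc n m k (VA 1) else 0) + hc n m k VPp
       + (if 1 \<le> m then (K - 1) * hc n m k VPm else 0) + hc n m k VXi"
      unfolding VPp using L_VPp[OF mlt] by simp
    also have "\<dots> = 0" unfolding A B using nz mn by (simp add: field_simps of_nat_diff ell_def KK)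
    finally show ?thesis .
  next
    case VPm
    then have m1: "1 \<le> m" using s by (simp add: scr mem_VPm)
    have A: "(if - int m + 1 \<le> -1 then K * hc n m k (VA (-1)) else 0) = - K * (of_int (int m - 1) / of_nat n)"
    proof (cases "- int m + 1 \<le> -1")
      case False
      then have "int m - 1 = 0" using m1 by linarith
      then show ?thesis using False by simp
    qed simp
    have B: "(if m < n then (K - 1) * hc n m k VPp else 0) = (K - 1) * (of_nat (n - m) / of_nat n)"
      using mn by (cases "m < n") auto
    have "Lf n m K (hc n m k) s = - (if - int m + 1 \<le> -1 then K * hc n m k (VA (-1)) else 0) + hc n m k VPm
       + (if m < n then (K - 1) * hc n m k VPp else 0) - hc n m k VXi"
      unfolding VPm using L_VPm[OF m1, where n=n] by simp
    also have "\<dots> = 0" unfolding A B using nz mn by (simp add: field_simps of_nat_diff ell_def KK)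
    finally show ?thesis .
  next
    case VXi
    then show ?thesis using s by (simp add: scr)
  qed
qed

lemma hX:
  assumes n2: "2 \<le> n" and mn: "m \<le> n"
  shows "Lf n m K (hc n m k) VXi = 1"
proof -
  have nz: "(of_nat n :: complex) \<noteq> 0" using n2 by simp
  have "Lf n m K (hc n m k) VXi = of_nat (n - m) / of_nat n + of_nat m / of_nat n"
    unfolding L_VXi using mn by auto
  also have "\<dots> = 1" using nz mn by (simp add: of_nat_diff field_simps)
  finally show ?thesis .
qed

lemma smult_neg: "(- a) *s (v :: complex ^ 'd) = - (a *s v)"
  by (simp add: vec_eq_iff)

lemma Hvec_eq:
  assumes n2: "2 \<le> n" and mn: "m \<le> n"
  shows "Hvec n m k V = (\<Sum>x\<in>present n m. hc n m k x *s V x)"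
proof -
  define g where "g = (\<lambda>x. hc n m k x *s V x)"
  define I1 where "I1 = {1 .. int n - int m - 1}"
  define I2 where "I2 = {- int m + 1 .. -1}"
  define Q where "Q = insert VPp (insert VPm (insert VXi (VA ` I1 \<union> VA ` I2)))"
  have fQ: "finite Q" unfolding Q_def I1_def I2_def by simp
  have PQ: "present n m \<subseteq> Q" unfolding Q_def I1_def I2_def present_def by auto
  have Z: "\<forall>x\<in>Q - present n m. g x = 0"
  proof
    fix x assume x: "x \<in> Q - present n m"
    then have "x = VPp \<or> x = VPm" unfolding Q_def I1_def I2_def present_def by auto
    then show "g x = 0"
    proof
      assume "x = VPp" then have "\<not> m < n" using x by (simp add: mem_VPp)
      then have "m = n" using mn by simp
      then show ?thesis using \<open>x = VPp\<close> unfolding g_def by simp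
    next
      assume "x = VPm" then have "m = 0" using x by (simp add: mem_VPm)
      then show ?thesis using \<open>x = VPm\<close> unfolding g_def by simp
    qed
  qed
  have "(\<Sum>x\<in>present n m. g x) = (\<Sum>x\<in>Q. g x)"
    by (rule sum.mono_neutral_left[OF fQ PQ Z])
  also have "\<dots> = g VPp + (g VPm + (g VXi + ((\<Sum>x\<in>VA ` I1. g x) + (\<Sum>x\<in>VA ` I2. g x))))"
  proof -
    have d: "VA ` I1 \<inter> VA ` I2 = {}" unfolding I1_def I2_def by auto
    have "(\<Sum>x\<in>VA ` I1 \<union> VA ` I2. g x) = (\<Sum>x\<in>VA ` I1. g x) + (\<Sum>x\<in>VA ` I2. g x)"
      by (rule sum.union_disjoint) (use d in \<open>auto simp: I1_def I2_def\<close>)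
    moreover have fU: "finite (VA ` I1 \<union> VA ` I2)" unfolding I1_def I2_def by simp
    ultimately show ?thesis unfolding Q_def by (simp add: image_iff)
  qed
  also have "(\<Sum>x\<in>VA ` I1. g x) = (\<Sum>i\<in>I1. (of_int (int n - i - int m) / of_nat n) *s V (VA i))"
    by (subst sum.reindex) (auto simp: inj_on_def g_def I1_def intro!: sum.cong)
  also have "(\<Sum>x\<in>VA ` I2. g x) = - (\<Sum>i\<in>I2. (of_int (int m + i) / of_nat n) *s V (VA i))"
    by (subst sum.reindex) (auto simp: inj_on_def g_def I2_def smult_neg sum_negf[symmetric] intro!: sum.cong)
  finally have "(\<Sum>x\<in>present n m. g x) = g VPp + (g VPm + (g VXi + ((\<Sum>i\<in>I1. (of_int (int n - i - int m) / of_nat n) *s V (VA i))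
      + - (\<Sum>i\<in>I2. (of_int (int m + i) / of_nat n) *s V (VA i)))))" .
  then show ?thesis unfolding Hvec_def g_def I1_def I2_def by (simp add: smult_neg algebra_simps)
qed

lemma bil_lin:
  assumes G: "\<forall>x\<in>present n m. \<forall>y\<in>present n m. bil (V x) (V y) = gram K x y"
    and s: "s \<in> present n m"
  shows "bil (V s) (\<Sum>x\<in>present n m. c x *s V x) = Lf n m K c s"
  unfolding Lf_def bil_sum bil_smult using G s by (intro sum.cong) auto

theorem lemma2p1:
  fixes n m :: nat
  assumes "2 \<le> n" and "m \<le> n" and "CARD('d) = n + 1"
  shows "\<exists>F :: complex set. finite F \<and>
    (\<forall>k. k \<notin> F \<and> k \<noteq> - of_nat n \<longrightarrow>
      (\<forall>V :: vlabel \<Rightarrow> complex ^ 'd.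
         (\<forall>x\<in>present n m. \<forall>y\<in>present n m. bil (V x) (V y) = gram (k + of_nat n) x y) \<longrightarrow>
         ({v \<in> currents_span n m V. \<forall>s\<in>screening_labels n m. commutes_screening (V s) v}
            = {t *s Hvec n m k V | t. True}
          \<and> Hvec n m k V \<noteq> 0
          \<and> bil (Hvec n m k V) (Hvec n m k V) = ell n k)))"
proof -
  have n2: "2 \<le> n" and mn: "m \<le> n" using assms by auto
  have nz: "(of_nat n :: complex) \<noteq> 0" using n2 by simp
  have n1z: "(of_nat n - 1 :: complex) \<noteq> 0"
  proof
    assume "(of_nat n - 1 :: complex) = 0"
    then have "(of_nat n :: complex) = of_nat 1" by simp
    then have "n = 1" by (simp only: of_nat_eq_iff)
    then show False using n2 by simp
  qed
  define F where "F = {k :: complex. ell n k = 0}"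
  have "F \<subseteq> {(2 - of_nat n) * of_nat n / (of_nat n - 1)}"
  proof
    fix k assume "k \<in> F"
    then have "(of_nat n - 1) / of_nat n * k + of_nat n - 2 = 0" unfolding F_def ell_def by simp
    then have "k = (2 - of_nat n) * of_nat n / (of_nat n - 1)" using nz n1z by (simp add: field_simps)
    then show "k \<in> {(2 - of_nat n) * of_nat n / (of_nat n - 1)}" by simp
  qed
  then have fF: "finite F" by (rule finite_subset) simp
  show ?thesis
  proof (intro exI conjI allI impI)
    show "finite F" by (rule fF)
    fix k :: complex and V :: "vlabel \<Rightarrow> complex ^ 'd"
    assume k: "k \<notin> F \<and> k \<noteq> - of_nat n"
    assume G: "\<forall>x\<in>present n m. \<forall>y\<in>present n m. bil (V x) (V y) = gram (k + of_nat n) x y"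
    define K where "K = k + of_nat n"
    have K0: "K \<noteq> 0" using k unfolding K_def by (metis add.commute neg_eq_iff_add_eq_0)
    have ell0: "ell n k \<noteq> 0" using k unfolding F_def by simp
    have G': "\<forall>x\<in>present n m. \<forall>y\<in>present n m. bil (V x) (V y) = gram K x y" using G unfolding K_def .
    define H where "H = Hvec n m k V"
    have Heq: "H = (\<Sum>x\<in>present n m. hc n m k x *s V x)" unfolding H_def by (rule Hvec_eq[OF n2 mn])
    have hL': "\<forall>s\<in>screening_labels n m. Lf n m K (hc n m k) s = 0" by (rule hL[OF n2 mn K_def])
    have HV: "bil (V s) H = Lf n m K (hc n m k) s" if "s \<in> present n m" for s
      unfolding Heq by (rule bil_lin[OF G' that])
    have HH: "bil H H = ell n k"
    proof -
      have "bil H H = (\<Sum>x\<in>present n m. hc n m k x * bil (V x) H)"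
        by (subst (1) Heq) (simp add: bil_sym[of "sum _ _"] bil_sum bil_smult bil_sym[of H])
      also have "\<dots> = (\<Sum>x\<in>present n m. if x = VXi then ell n k else 0)"
      proof (intro sum.cong refl)
        fix x assume x: "x \<in> present n m"
        show "hc n m k x * bil (V x) H = (if x = VXi then ell n k else 0)"
        proof (cases "x = VXi")
          case True then show ?thesis using HV[OF x] hX[OF n2 mn] by simp
        next
          case False
          then have "x \<in> screening_labels n m" using x by (simp add: scr)
          then show ?thesis using HV[OF x] hL' False by simp
        qed
      qed
      also have "\<dots> = ell n k" by (simp add: present_finite mem_VXi)
      finally show ?thesis .
    qed
    show "bil (Hvec n m k V) (Hvec n m k V) = ell n k" using HH unfolding H_def .
    show "Hvec n m k V \<noteq> 0"
    proof
      assume "Hvec n m k V = 0"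
      then have "bil H H = 0" unfolding H_def by (simp add: bil_zero)
      then show False using HH ell0 by simp
    qed
    show "{v \<in> currents_span n m V. \<forall>s\<in>screening_labels n m. commutes_screening (V s) v}
            = {t *s Hvec n m k V | t. True}"
    proof (intro equalityI subsetI)
      fix v assume v: "v \<in> {v \<in> currents_span n m V. \<forall>s\<in>screening_labels n m. commutes_screening (V s) v}"
      then obtain c where c: "v = (\<Sum>x\<in>present n m. c x *s V x)" unfolding currents_span_def by auto
      have "\<forall>s\<in>screening_labels n m. Lf n m K c s = 0"
      proof
        fix s assume s: "s \<in> screening_labels n m"
        then have "bil (V s) v = 0" using v unfolding commutes_screening_def by auto
        moreover have "s \<in> present n m" using s by (simp add: scr)
        ultimately show "Lf n m K c s = 0" using bil_lin[OF G'] c by simp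
      qed
      then obtain t where t: "\<forall>x\<in>present n m. c x = t * hc n m k x" using uniq[OF n2 mn K_def K0] by blast
      have "v = (\<Sum>x\<in>present n m. t *s (hc n m k x *s V x))"
        unfolding c using t by (intro sum.cong) (auto simp: vec_eq_iff)
      also have "\<dots> = t *s H" unfolding Heq by (simp add: vec_eq_iff sum_distrib_left mult.assoc)
      finally show "v \<in> {t *s Hvec n m k V | t. True}" unfolding H_def by blast
    next
      fix v assume "v \<in> {t *s Hvec n m k V | t. True}"
      then obtain t where t: "v = t *s H" unfolding H_def by blast
      have vv: "v = (\<Sum>x\<in>present n m. (t * hc n m k x) *s V x)"
        unfolding t Heq by (simp add: vec_eq_iff sum_distrib_left mult.assoc)
      have "v \<in> currents_span n m V" unfolding currents_span_def
        by (rule CollectI, rule exI[where x="\<lambda>x. t * hc n m k x"]) (simp add: vv)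
      moreover have "\<forall>s\<in>screening_labels n m. commutes_screening (V s) v"
      proof
        fix s assume s: "s \<in> screening_labels n m"
        then have sp: "s \<in> present n m" by (simp add: scr)
        show "commutes_screening (V s) v" unfolding commutes_screening_def t bil_smult
          using HV[OF sp] hL' s by simp
      qed
      ultimately show "v \<in> {v \<in> currents_span n m V. \<forall>s\<in>screening_labels n m. commutes_screening (V s) v}" by blast
    qed
  qed
qed

end
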